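(* Assume each $f_i$ is $\sigma_i$-strongly convex with $L_i$-Lipschitz continuous gradient. Then for all $\lambda,\bar\lambda\in\mathbb{D}$, \[ d(\lambda)\ \ge\ d(\bar\lambda)+\langle \nabla d(\bar\lambda),\lambda-\bar\lambda\rangle-\tfrac12\|\lambda-\bar\lambda\|_W^2 . \]
   Context: Standing setup. Consider $\min_{z}\ f(z)=\sum_{i=1}^M f_i(z_i)$ subject to $Az=b$, $Cz\le c$, where $z=(z_1,\dots,z_M)$, $z_i\in\mathbb{R}^{n_i}$, $n=\sum_i n_i$, $A\in\mathbb{R}^{p\times n}$, $C\in\mathbb{R}^{q\times n}$, $b\in\mathbb{R}^p$, $c\in\mathbb{R}^q$, and each $f_i:\mathbb{R}^{n_i}\to\mathbb{R}$ is convex. The rows are partitioned into $\bar M$ blocks: $A$ has blocks $A_{ji}\in\mathbb{R}^{p_j\times n_i}$ and $C$ has blocks $C_{ji}\in\mathbb{R}^{q_j\times n_i}$ ($j=1,\dots,\bar M$, $i=1,\dots,M$, $\sum_j p_j=p$, $\sum_j q_j=q$). A matrix $E\in\{0,1\}^{\bar M\times M}$ is given such that $E_{ji}=0$ implies $A_{ji}=0$ and $C_{ji}=0$. Let $\bar{\mathcal N}_i=\{j: E_{ji}\neq 0\}$ and $\mathcal N_j=\{i:E_{ji}\ne 0\}$. Let $G=\begin{bmatrix}A\\ C\end{bmatrix}$, $g=\begin{bmatrix}b\\ c\end{bmatrix}$, dual variable $\lambda=(\nu,\mu)\in\mathbb{R}^p\times\mathbb{R}^q$, and $\mathbb{D}=\mathbb{R}^p\times\mathbb{R}^q_+$.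 The Lagrangian is $\mathcal L(z,\lambda)=f(z)+\langle\lambda,Gz-g\rangle$ and the dual function is $d(\lambda)=\min_{z\in\mathbb{R}^n}\mathcal L(z,\lambda)$; under strong convexity of $f$ it is differentiable with $\nabla d(\lambda)=Gz(\lambda)-g$, where $z(\lambda)$ is the unique minimizer of $\mathcal L(\cdot,\lambda)$. For each $i$, let $L_{d_i}=\big\|\begin{bmatrix}[A_{ji}]_{j\in\bar{\mathcal N}_i}\\ [C_{ji}]_{j\in\bar{\mathcal N}_i}\end{bmatrix}\big\|^2/\sigma_i$ (spectral norm of the stacked column blocks). Let $W=\mathrm{diag}(W_\nu,W_\mu)$ with $W_\nu=\mathrm{diag}\big(\sum_{i\in\mathcal N_j}L_{d_i}I_{p_j};\ j=1,\dots,\bar M\big)$ and $W_\mu=\mathrm{diag}\big(\sum_{i\in\mathcal N_j}L_{d_i}I_{q_j};\ j=1,\dots,\bar M\big)$. For $x$ and positive semidefinite $W$, $\|x\|_W=\sqrt{x^TWx}$. *)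

theory Defs
  imports Complex_Main
begin

text \<open>Vectors of R^m are represented as functions nat => real vanishing at indices >= m.
  Block vectors z = (z_1,...,z_M), z_i in R^(n i), are functions nat => nat => real
  (block index, coordinate).  Dual variables nu, mu are functions nat => nat => real
  indexed by (row block j, row r).\<close>

definition vecs :: "nat \<Rightarrow> (nat \<Rightarrow> real) set" where
  "vecs m = {x. \<forall>k. m \<le> k \<longrightarrow> x k = 0}"

definition innern :: "nat \<Rightarrow> (nat \<Rightarrow> real) \<Rightarrow> (nat \<Rightarrow> real) \<Rightarrow> real" where
  "innern m x y = (\<Sum>k<m. x k * y k)"

definition normn :: "nat \<Rightarrow> (nat \<Rightarrow> real) \<Rightarrow> real" where
  "normn m x = sqrt (innern m x x)"

definition strongly_convex_vec :: "nat \<Rightarrow> ((nat \<Rightarrow> real) \<Rightarrow> real) \<Rightarrow> real \<Rightarrow> bool" where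
  "strongly_convex_vec m f \<sigma> \<longleftrightarrow>
     (\<forall>x\<in>vecs m. \<forall>y\<in>vecs m. \<forall>t::real. 0 \<le> t \<and> t \<le> 1 \<longrightarrow>
        f (\<lambda>k. t * x k + (1 - t) * y k)
          \<le> t * f x + (1 - t) * f y - \<sigma> / 2 * t * (1 - t) * (normn m (\<lambda>k. x k - y k))\<^sup>2)"

definition has_grad_vec :: "nat \<Rightarrow> ((nat \<Rightarrow> real) \<Rightarrow> real) \<Rightarrow> (nat \<Rightarrow> real) \<Rightarrow> (nat \<Rightarrow> real) \<Rightarrow> bool" where
  "has_grad_vec m f g x \<longleftrightarrow> g \<in> vecs m \<and>
     (\<forall>e>0. \<exists>\<delta>>0. \<forall>h\<in>vecs m. normn m h < \<delta> \<longrightarrow>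
        \<bar>f (\<lambda>k. x k + h k) - f x - innern m g h\<bar> \<le> e * normn m h)"

definition lipschitz_grad_vec :: "nat \<Rightarrow> ((nat \<Rightarrow> real) \<Rightarrow> real) \<Rightarrow> real \<Rightarrow> bool" where
  "lipschitz_grad_vec m f L \<longleftrightarrow>
     (\<exists>gf. (\<forall>x\<in>vecs m. has_grad_vec m f (gf x) x) \<and>
        (\<forall>x\<in>vecs m. \<forall>y\<in>vecs m. normn m (\<lambda>k. gf x k - gf y k) \<le> L * normn m (\<lambda>k. x k - y k)))"

definition zdom :: "nat \<Rightarrow> (nat \<Rightarrow> nat) \<Rightarrow> (nat \<Rightarrow> nat \<Rightarrow> real) set" where
  "zdom M n = {z. \<forall>i k. \<not> (i < M \<and> k < n i) \<longrightarrow> z i k = 0}"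

definition blk_mult :: "nat \<Rightarrow> (nat \<Rightarrow> nat) \<Rightarrow> (nat \<Rightarrow> nat \<Rightarrow> nat \<Rightarrow> nat \<Rightarrow> real)
    \<Rightarrow> (nat \<Rightarrow> nat \<Rightarrow> real) \<Rightarrow> nat \<Rightarrow> nat \<Rightarrow> real" where
  "blk_mult M n A z j r = (\<Sum>i<M. \<Sum>k<n i. A j i r k * z i k)"

definition lagrangian where
  "lagrangian M Mb n p q A C b c f z \<nu> \<mu> =
     (\<Sum>i<M. f i (z i))
     + (\<Sum>j<Mb. \<Sum>r<p j. \<nu> j r * (blk_mult M n A z j r - b j r))
     + (\<Sum>j<Mb. \<Sum>r<q j. \<mu> j r * (blk_mult M n C z j r - c j r))"

definition dual_fun where
  "dual_fun M Mb n p q A C b c f \<nu> \<mu> =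
     (INF z\<in>zdom M n. lagrangian M Mb n p q A C b c f z \<nu> \<mu>)"

definition zopt where
  "zopt M Mb n p q A C b c f \<nu> \<mu> =
     (THE z. z \<in> zdom M n \<and>
        (\<forall>z'\<in>zdom M n. lagrangian M Mb n p q A C b c f z \<nu> \<mu>
                         \<le> lagrangian M Mb n p q A C b c f z' \<nu> \<mu>))"

text \<open>grad d(lambda) = G z(lambda) - g, split into its nu- and mu-parts.\<close>
definition dual_grad_nu where
  "dual_grad_nu M Mb n p q A C b c f \<nu> \<mu> j r =
     blk_mult M n A (zopt M Mb n p q A C b c f \<nu> \<mu>) j r - b j r"

definition dual_grad_mu where
  "dual_grad_mu M Mb n p q A C b c f \<nu> \<mu> j r =
     blk_mult M n C (zopt M Mb n p q A C b c f \<nu> \<mu>) j r - c j r"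

text \<open>Spectral norm of the stacked column block [A_ji ; C_ji]_{j in Nbar_i}.\<close>
definition col_spec_norm where
  "col_spec_norm Mb n p q A C E i =
     (SUP x\<in>{x\<in>vecs (n i). normn (n i) x \<le> 1}.
        sqrt (\<Sum>j\<in>{j. j < Mb \<and> E j i}.
           (\<Sum>r<p j. (\<Sum>k<n i. A j i r k * x k)\<^sup>2) + (\<Sum>r<q j. (\<Sum>k<n i. C j i r k * x k)\<^sup>2)))"

definition Ld where
  "Ld Mb n p q A C E \<sigma> i = (col_spec_norm Mb n p q A C E i)\<^sup>2 / \<sigma> i"

definition Wweight where
  "Wweight M Mb n p q A C E \<sigma> j = (\<Sum>i\<in>{i. i < M \<and> E j i}. Ld Mb n p q A C E \<sigma> i)"

definition Wnorm_sq where
  "Wnorm_sq M Mb n p q A C E \<sigma> \<nu> \<mu> =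
     (\<Sum>j<Mb. Wweight M Mb n p q A C E \<sigma> j * ((\<Sum>r<p j. (\<nu> j r)\<^sup>2) + (\<Sum>r<q j. (\<mu> j r)\<^sup>2)))"

definition in_D :: "nat \<Rightarrow> (nat \<Rightarrow> nat) \<Rightarrow> (nat \<Rightarrow> nat \<Rightarrow> real) \<Rightarrow> bool" where
  "in_D Mb q \<mu> \<longleftrightarrow> (\<forall>j<Mb. \<forall>r<q j. 0 \<le> \<mu> j r)"

end

theory Submission
  imports Defs
begin


lemma innern_nonneg: "0 \<le> innern m x x"
  unfolding innern_def by (auto intro: sum_nonneg)

lemma normn_sq: "(normn m x)\<^sup>2 = innern m x x"
  unfolding normn_def using innern_nonneg by simp

lemma normn_nonneg: "0 \<le> normn m x"
  unfolding normn_def using innern_nonneg by simp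

lemma innern_scale: "innern m g (\<lambda>k. t * h k) = t * innern m g h"
  unfolding innern_def by (simp add: sum_distrib_left algebra_simps)

lemma innern_scale2: "innern m (\<lambda>k. t * h k) (\<lambda>k. t * h k) = t\<^sup>2 * innern m h h"
  unfolding innern_def by (simp add: sum_distrib_left algebra_simps power2_eq_square)

lemma normn_scale: "0 \<le> t \<Longrightarrow> normn m (\<lambda>k. t * h k) = t * normn m h"
  unfolding normn_def innern_scale2 by (simp add: real_sqrt_mult)

lemma aux_frac: "0 \<le> (a::real) \<Longrightarrow> 0 < \<eta> \<Longrightarrow> a * (\<eta>/(2*(a+1))) \<le> \<eta>/2"
  by (simp add: field_simps)

lemma grad_ineq:
  assumes sc: "strongly_convex_vec m f \<sigma>" and g: "has_grad_vec m f g x"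
    and x: "x \<in> vecs m" and y: "y \<in> vecs m"
  shows "f x + innern m g (\<lambda>k. y k - x k) + \<sigma>/2 * innern m (\<lambda>k. y k - x k) (\<lambda>k. y k - x k) \<le> f y"
proof (rule ccontr)
  define h where "h = (\<lambda>k. y k - x k)"
  define D where "D = innern m h h"
  define N where "N = normn m h"
  define \<eta> where "\<eta> = f x + innern m g h + \<sigma>/2*D - f y"
  assume "\<not> ?thesis"
  then have eta: "0 < \<eta>" unfolding \<eta>_def h_def D_def by simp
  have hv: "h \<in> vecs m" using x y by (auto simp: vecs_def h_def)
  have N0: "0 \<le> N" by (simp add: N_def normn_nonneg)
  have DN: "D = N\<^sup>2" by (simp add: D_def N_def normn_sq)
  define e where "e = \<eta>/(2*(N+1))"
  have e0: "0 < e" using eta N0 by (simp add: e_def)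
  obtain \<delta> where d0: "\<delta> > 0" and H: "\<forall>h\<in>vecs m. normn m h < \<delta> \<longrightarrow>
        \<bar>f (\<lambda>k. x k + h k) - f x - innern m g h\<bar> \<le> e * normn m h"
    using g e0 unfolding has_grad_vec_def by blast
  define t where "t = min (1/2) (min (\<delta>/(2*(N+1))) (\<eta>/(2*(\<bar>\<sigma>\<bar>*D+1))))"
  have D0: "0 \<le> D" by (simp add: D_def innern_nonneg)
  have sd: "0 < \<bar>\<sigma>\<bar>*D+1" using D0 by (simp add: add_nonneg_pos)
  have t0: "0 < t" using d0 N0 eta sd by (simp add: t_def)
  have t1: "t \<le> 1/2" unfolding t_def by (rule min.cobounded1)
  have tv: "(\<lambda>k. t * h k) \<in> vecs m" using hv by (auto simp: vecs_def)
  have tN: "normn m (\<lambda>k. t * h k) = t * N" using t0 by (simp add: normn_scale N_def)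
  have "t * N < \<delta>"
  proof -
    have "t \<le> \<delta>/(2*(N+1))" by (simp add: t_def)
    then have "t * N \<le> \<delta>/(2*(N+1)) * N" by (rule mult_right_mono[OF _ N0])
    also have "\<dots> < \<delta>" using d0 N0 by (simp add: field_simps add_nonneg_pos)
    finally show ?thesis .
  qed
  then have H1: "\<bar>f (\<lambda>k. x k + t * h k) - f x - t * innern m g h\<bar> \<le> e * (t * N)"
    using H[rule_format, OF tv] tN by (simp add: innern_scale)
  have eqp: "(\<lambda>k. t * y k + (1 - t) * x k) = (\<lambda>k. x k + t * h k)"
    by (auto simp: h_def algebra_simps)
  have "f (\<lambda>k. t * y k + (1 - t) * x k) \<le> t * f y + (1 - t) * f x - \<sigma> / 2 * t * (1 - t) * N\<^sup>2"
    using sc x y t0 t1 unfolding strongly_convex_vec_def N_def h_def by auto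
  then have H2: "f (\<lambda>k. x k + t * h k) \<le> t * f y + (1 - t) * f x - \<sigma> / 2 * t * (1 - t) * D"
    using eqp DN by simp
  from H1 H2 have "t * innern m g h - e * (t * N) \<le> t * (f y - f x) - t * (\<sigma> / 2 * (1 - t) * D)"
    by (simp add: algebra_simps)
  then have "t * (innern m g h - e * N) \<le> t * (f y - f x - \<sigma> / 2 * (1 - t) * D)"
    by (simp add: algebra_simps)
  then have A1: "innern m g h - e * N \<le> f y - f x - \<sigma> / 2 * (1 - t) * D"
    using t0 by simp
  then have A2: "\<eta> \<le> e * N + \<sigma>/2 * t * D" unfolding \<eta>_def by (simp add: algebra_simps add_divide_distrib diff_divide_distrib)
  have B1: "e * N < \<eta>/2"
  proof -
    have "e * N = \<eta> * N / (2*(N+1))" by (simp add: e_def)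
    also have "\<dots> < \<eta>/2" using eta N0 by (simp add: field_simps)
    finally show ?thesis .
  qed
  have B2: "\<sigma>/2 * t * D \<le> \<eta>/2"
  proof -
    have "\<sigma>/2 * t * D \<le> \<bar>\<sigma>\<bar> * t * D" using t0 D0
      by (smt (verit, best) mult_nonneg_nonneg mult_right_mono abs_ge_self field_sum_of_halves abs_ge_zero)
    also have "\<dots> \<le> \<bar>\<sigma>\<bar> * D * (\<eta>/(2*(\<bar>\<sigma>\<bar>*D+1)))"
    proof -
      have "t \<le> \<eta>/(2*(\<bar>\<sigma>\<bar>*D+1))" by (simp add: t_def)
      moreover have "0 \<le> \<bar>\<sigma>\<bar>*D" using D0 by simp
      ultimately have "\<bar>\<sigma>\<bar>*D*t \<le> \<bar>\<sigma>\<bar>*D*(\<eta>/(2*(\<bar>\<sigma>\<bar>*D+1)))" by (rule mult_left_mono)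
      then show ?thesis by (simp add: algebra_simps)
    qed
    also have "\<dots> \<le> \<eta>/2" using aux_frac[of "\<bar>\<sigma>\<bar>*D" \<eta>] D0 eta by simp
    finally show ?thesis .
  qed
  from A2 B1 B2 show False by simp
qed

lemma grad_cont:
  assumes g: "has_grad_vec m f g x" and x: "x \<in> vecs m"
    and ys: "\<And>k. ys k \<in> vecs m" and lim: "\<And>c. (\<lambda>k. ys k c) \<longlonglongrightarrow> x c"
  shows "(\<lambda>k. f (ys k)) \<longlonglongrightarrow> f x"
proof -
  define hs where "hs k = (\<lambda>c. ys k c - x c)" for k
  have hv: "hs k \<in> vecs m" for k using ys[of k] x by (auto simp: vecs_def hs_def)
  have eq: "(\<lambda>c. x c + hs k c) = ys k" for k by (auto simp: hs_def)
  have "(\<lambda>k. \<Sum>c<m. g c * (ys k c - x c)) \<longlonglongrightarrow> (\<Sum>c<m. g c * (x c - x c))"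
    by (intro tendsto_intros lim)
  then have hin: "(\<lambda>k. innern m g (hs k)) \<longlonglongrightarrow> 0" by (simp add: innern_def hs_def)
  have "(\<lambda>k. sqrt (\<Sum>c<m. (ys k c - x c) * (ys k c - x c))) \<longlonglongrightarrow> sqrt (\<Sum>c<m. (x c - x c) * (x c - x c))"
    by (intro tendsto_intros lim)
  then have hn: "(\<lambda>k. normn m (hs k)) \<longlonglongrightarrow> 0" by (simp add: normn_def innern_def hs_def)
  obtain \<delta> where d0: "\<delta> > 0" and H: "\<forall>h\<in>vecs m. normn m h < \<delta> \<longrightarrow>
        \<bar>f (\<lambda>k. x k + h k) - f x - innern m g h\<bar> \<le> 1 * normn m h"
    using g unfolding has_grad_vec_def by (meson zero_less_one)
  have ev: "eventually (\<lambda>k. normn m (hs k) < \<delta>) sequentially"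
    using order_tendstoD(2)[OF hn d0] .
  have "eventually (\<lambda>k. norm (f (ys k) - f x - innern m g (hs k)) \<le> norm (normn m (hs k)) * 1) sequentially"
    using ev
  proof (rule eventually_mono)
    fix k assume "normn m (hs k) < \<delta>"
    then show "norm (f (ys k) - f x - innern m g (hs k)) \<le> norm (normn m (hs k)) * 1"
    proof -
      have "\<bar>f (\<lambda>c. x c + hs k c) - f x - innern m g (hs k)\<bar> \<le> 1 * normn m (hs k)"
        using H hv[of k] \<open>normn m (hs k) < \<delta>\<close> by blast
      then show ?thesis using eq[of k] normn_nonneg[of m "hs k"] by simp
    qed
  qed
  then have R: "(\<lambda>k. f (ys k) - f x - innern m g (hs k)) \<longlonglongrightarrow> 0"
    by (rule tendsto_0_le[OF hn])
  have "(\<lambda>k. (f (ys k) - f x - innern m g (hs k)) + f x + innern m g (hs k)) \<longlonglongrightarrow> 0 + f x + 0"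
    by (intro tendsto_add R tendsto_const hin)
  then show ?thesis by simp
qed




definition colval :: "nat \<Rightarrow> (nat \<Rightarrow> nat) \<Rightarrow> (nat \<Rightarrow> nat) \<Rightarrow> (nat \<Rightarrow> nat)
   \<Rightarrow> (nat \<Rightarrow> nat \<Rightarrow> nat \<Rightarrow> nat \<Rightarrow> real) \<Rightarrow> (nat \<Rightarrow> nat \<Rightarrow> nat \<Rightarrow> nat \<Rightarrow> real)
   \<Rightarrow> (nat \<Rightarrow> nat \<Rightarrow> bool) \<Rightarrow> nat \<Rightarrow> (nat \<Rightarrow> real) \<Rightarrow> real" where
  "colval Mb n p q A C E i x = (\<Sum>j\<in>{j. j < Mb \<and> E j i}.
           (\<Sum>r<p j. (\<Sum>k<n i. A j i r k * x k)\<^sup>2) + (\<Sum>r<q j. (\<Sum>k<n i. C j i r k * x k)\<^sup>2))"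

lemma colval_nonneg: "0 \<le> colval Mb n p q A C E i x"
  unfolding colval_def by (intro sum_nonneg add_nonneg_nonneg) auto

lemma colval_scale: "colval Mb n p q A C E i (\<lambda>k. t * x k) = t\<^sup>2 * colval Mb n p q A C E i x"
  unfolding colval_def
  by (simp add: sum_distrib_left[symmetric] mult.left_commute[of _ t] power_mult_distrib distrib_left)
     (simp add: sum_distrib_left distrib_left)

lemma coord_le: "k < m \<Longrightarrow> (x k)\<^sup>2 \<le> innern m x x"
proof -
  assume "k < m"
  then have "x k * x k \<le> (\<Sum>c<m. x c * x c)"
    by (intro member_le_sum[where f="\<lambda>c. x c * x c"]) auto
  then show ?thesis by (simp add: innern_def power2_eq_square)
qed

lemma sq_bound:
  fixes a x :: "nat \<Rightarrow> real"
  assumes "\<And>k. k < m \<Longrightarrow> \<bar>x k\<bar> \<le> 1"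
  shows "(\<Sum>k<m. a k * x k)\<^sup>2 \<le> (\<Sum>k<m. \<bar>a k\<bar>)\<^sup>2"
proof -
  have "\<bar>\<Sum>k<m. a k * x k\<bar> \<le> (\<Sum>k<m. \<bar>a k * x k\<bar>)" by (rule sum_abs)
  also have "\<dots> \<le> (\<Sum>k<m. \<bar>a k\<bar>)"
  proof (rule sum_mono)
    fix k assume "k \<in> {..<m}"
    then have "\<bar>x k\<bar> \<le> 1" using assms by auto
    then show "\<bar>a k * x k\<bar> \<le> \<bar>a k\<bar>" by (simp add: abs_mult mult_left_le)
  qed
  finally have "\<bar>\<Sum>k<m. a k * x k\<bar> \<le> (\<Sum>k<m. \<bar>a k\<bar>)" .
  then have "\<bar>\<Sum>k<m. a k * x k\<bar>\<^sup>2 \<le> (\<Sum>k<m. \<bar>a k\<bar>)\<^sup>2"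
    by (intro power_mono) auto
  then show ?thesis by simp
qed

lemma spec_eq: "col_spec_norm Mb n p q A C E i =
   (SUP x\<in>{x\<in>vecs (n i). normn (n i) x \<le> 1}. sqrt (colval Mb n p q A C E i x))"
  unfolding col_spec_norm_def colval_def by simp

lemma spec_bound:
  assumes x: "x \<in> vecs (n i)"
  shows "colval Mb n p q A C E i x \<le> (col_spec_norm Mb n p q A C E i)\<^sup>2 * innern (n i) x x"
proof -
  define s where "s = col_spec_norm Mb n p q A C E i"
  define B where "B = (\<Sum>j\<in>{j. j < Mb \<and> E j i}.
           (\<Sum>r<p j. (\<Sum>k<n i. \<bar>A j i r k\<bar>)\<^sup>2) + (\<Sum>r<q j. (\<Sum>k<n i. \<bar>C j i r k\<bar>)\<^sup>2))"
  define U where "U = {x\<in>vecs (n i). normn (n i) x \<le> 1}"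
  have bdd: "bdd_above ((\<lambda>x. sqrt (colval Mb n p q A C E i x)) ` U)"
  proof (rule bdd_aboveI2)
    fix y assume "y \<in> U"
    then have "normn (n i) y \<le> 1" by (simp add: U_def)
    then have "innern (n i) y y \<le> 1"
      using normn_sq[of "n i" y] normn_nonneg[of "n i" y]
      by (metis abs_of_nonneg one_power2 power2_le_iff_abs_le zero_le_one order_trans)
    then have "\<bar>y k\<bar> \<le> 1" if "k < n i" for k using coord_le[OF that, of y]
      by (metis abs_square_le_1 order_trans)
    then have "colval Mb n p q A C E i y \<le> B"
      unfolding colval_def B_def
      by (intro sum_mono add_mono sq_bound) auto
    then show "sqrt (colval Mb n p q A C E i y) \<le> sqrt B" by simp
  qed
  have upper: "sqrt (colval Mb n p q A C E i y) \<le> s" if "y \<in> U" for y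
    unfolding s_def spec_eq U_def[symmetric] using bdd that by (rule cSUP_upper2) simp
  have z: "(\<lambda>k. 0) \<in> U" by (simp add: U_def vecs_def normn_def innern_def)
  have s0: "0 \<le> s" using upper[OF z] real_sqrt_ge_zero[OF colval_nonneg] by (rule order_trans[rotated])
  show ?thesis
  proof (cases "innern (n i) x x = 0")
    case True
    then have "\<forall>k\<in>{..<n i}. x k * x k = 0" unfolding innern_def
      by (subst sum_nonneg_eq_0_iff[symmetric]) auto
    then have "colval Mb n p q A C E i x = 0" unfolding colval_def by simp
    then show ?thesis using True by simp
  next
    case False
    define N where "N = normn (n i) x"
    have N0: "0 < N" using False innern_nonneg[of "n i" x] by (simp add: N_def normn_def)
    define y where "y = (\<lambda>k. (1/N) * x k)"
    have "innern (n i) y y = (1/N)\<^sup>2 * N\<^sup>2" unfolding y_def innern_scale2 N_def normn_sq ..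
    then have "innern (n i) y y = 1" using N0 by (simp add: power_divide)
    then have "normn (n i) y = 1" by (simp add: normn_def)
    moreover have "y \<in> vecs (n i)" using x by (auto simp: vecs_def y_def)
    ultimately have "y \<in> U" by (simp add: U_def)
    then have "sqrt (colval Mb n p q A C E i y) \<le> s" by (rule upper)
    then have "colval Mb n p q A C E i y \<le> s\<^sup>2"
      using colval_nonneg by (metis real_le_rsqrt real_sqrt_le_iff real_sqrt_unique s0 order_trans real_sqrt_pow2 power_mono real_sqrt_ge_zero)
    then have "(1/N)\<^sup>2 * colval Mb n p q A C E i x \<le> s\<^sup>2" unfolding y_def colval_scale .
    then have "colval Mb n p q A C E i x \<le> s\<^sup>2 * N\<^sup>2" using N0 by (simp add: field_simps power_divide)
    then show ?thesis by (simp add: s_def N_def normn_sq)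
  qed
qed




lemma amgm: "0 < (t::real) \<Longrightarrow> -(t/2*a\<^sup>2 + v\<^sup>2/(2*t)) \<le> a*v"
proof -
  assume t: "0 < t"
  have "0 \<le> (t*a+v)\<^sup>2/(2*t)" using t by simp
  also have "(t*a+v)\<^sup>2/(2*t) = t/2*a\<^sup>2 + v\<^sup>2/(2*t) + a*v"
    using t by (simp add: field_simps power2_eq_square)
  finally show ?thesis by simp
qed

lemma amgm_sum: "0 < (t::real) \<Longrightarrow>
   -(t/2*(\<Sum>r\<in>R. (a r)\<^sup>2) + (\<Sum>r\<in>R. (v r)\<^sup>2)/(2*t)) \<le> (\<Sum>r\<in>R. a r * v r)"
proof -
  assume t: "0 < t"
  have "(\<Sum>r\<in>R. -(t/2*(a r)\<^sup>2 + (v r)\<^sup>2/(2*t))) \<le> (\<Sum>r\<in>R. a r * v r)"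
    by (rule sum_mono, rule amgm[OF t])
  moreover have "(\<Sum>r\<in>R. -(t/2*(a r)\<^sup>2 + (v r)\<^sup>2/(2*t))) = -(t/2*(\<Sum>r\<in>R. (a r)\<^sup>2) + (\<Sum>r\<in>R. (v r)\<^sup>2)/(2*t))"
    by (simp add: sum_negf sum.distrib sum_distrib_left sum_divide_distrib sum_subtractf)
  ultimately show ?thesis by simp
qed

lemma cross_i:
  fixes Mb :: nat and n p q :: "nat \<Rightarrow> nat" and A C :: "nat \<Rightarrow> nat \<Rightarrow> nat \<Rightarrow> nat \<Rightarrow> real"
    and E :: "nat \<Rightarrow> nat \<Rightarrow> bool" and \<sigma> :: "nat \<Rightarrow> real" and i :: nat
    and dn dm :: "nat \<Rightarrow> nat \<Rightarrow> real" and x :: "nat \<Rightarrow> real"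
  assumes sp: "\<forall>j<Mb. \<not> E j i \<longrightarrow> (\<forall>r<p j. \<forall>k<n i. A j i r k = 0) \<and> (\<forall>r<q j. \<forall>k<n i. C j i r k = 0)"
    and sg: "0 < \<sigma> i" and x: "x \<in> vecs (n i)"
  shows "-(\<sigma> i/2 * innern (n i) x x) - Ld Mb n p q A C E \<sigma> i/2 *
      (\<Sum>j\<in>{j. j<Mb \<and> E j i}. (\<Sum>r<p j. (dn j r)\<^sup>2) + (\<Sum>r<q j. (dm j r)\<^sup>2))
    \<le> (\<Sum>j<Mb. \<Sum>r<p j. dn j r * (\<Sum>k<n i. A j i r k * x k))
      + (\<Sum>j<Mb. \<Sum>r<q j. dm j r * (\<Sum>k<n i. C j i r k * x k))"
proof -
  define S where "S = {j. j<Mb \<and> E j i}"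
  define V where "V j r = (\<Sum>k<n i. A j i r k * x k)" for j r
  define U where "U j r = (\<Sum>k<n i. C j i r k * x k)" for j r
  define X where "X j = (\<Sum>r<p j. dn j r * V j r)" for j
  define Y where "Y j = (\<Sum>r<q j. dm j r * U j r)" for j
  define NN where "NN = (\<Sum>j\<in>S. (\<Sum>r<p j. (dn j r)\<^sup>2) + (\<Sum>r<q j. (dm j r)\<^sup>2))"
  define s where "s = col_spec_norm Mb n p q A C E i"
  have Ld: "Ld Mb n p q A C E \<sigma> i = s\<^sup>2 / \<sigma> i" by (simp add: Ld_def s_def)
  have NN0: "0 \<le> NN" unfolding NN_def by (intro sum_nonneg add_nonneg_nonneg) auto
  have in0: "0 \<le> innern (n i) x x" by (rule innern_nonneg)
  have rhs: "(\<Sum>j<Mb. \<Sum>r<p j. dn j r * (\<Sum>k<n i. A j i r k * x k))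
      + (\<Sum>j<Mb. \<Sum>r<q j. dm j r * (\<Sum>k<n i. C j i r k * x k)) = (\<Sum>j\<in>S. X j + Y j)"
  proof -
    have "(\<Sum>j<Mb. \<Sum>r<p j. dn j r * (\<Sum>k<n i. A j i r k * x k))
      + (\<Sum>j<Mb. \<Sum>r<q j. dm j r * (\<Sum>k<n i. C j i r k * x k)) = (\<Sum>j<Mb. X j + Y j)"
      by (simp add: X_def Y_def V_def U_def sum.distrib)
    also have "\<dots> = (\<Sum>j\<in>S. X j + Y j)"
    proof (rule sum.mono_neutral_right)
      show "finite {..<Mb}" by simp
      show "S \<subseteq> {..<Mb}" by (auto simp: S_def)
      show "\<forall>j\<in>{..<Mb} - S. X j + Y j = 0"
      proof
        fix j assume "j \<in> {..<Mb} - S"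
        then have "j < Mb" "\<not> E j i" by (auto simp: S_def)
        then have "(\<forall>r<p j. \<forall>k<n i. A j i r k = 0) \<and> (\<forall>r<q j. \<forall>k<n i. C j i r k = 0)"
          using sp by blast
        then show "X j + Y j = 0" by (simp add: X_def Y_def V_def U_def)
      qed
    qed
    finally show ?thesis .
  qed
  have cv: "colval Mb n p q A C E i x = (\<Sum>j\<in>S. (\<Sum>r<p j. (V j r)\<^sup>2) + (\<Sum>r<q j. (U j r)\<^sup>2))"
    by (simp add: colval_def S_def V_def U_def)
  have cb: "colval Mb n p q A C E i x \<le> s\<^sup>2 * innern (n i) x x"
    unfolding s_def by (rule spec_bound[where n=n and i=i, OF x])
  show ?thesis
  proof (cases "s = 0")
    case True
    then have "colval Mb n p q A C E i x \<le> 0" using cb by simp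
    then have c0: "(\<Sum>j\<in>S. (\<Sum>r<p j. (V j r)\<^sup>2) + (\<Sum>r<q j. (U j r)\<^sup>2)) = 0"
      using colval_nonneg[of Mb n p q A C E i x] cv by simp
    have fS: "finite S" by (simp add: S_def)
    have "X j + Y j = 0" if j: "j \<in> S" for j
    proof -
      have "(\<Sum>r<p j. (V j r)\<^sup>2) + (\<Sum>r<q j. (U j r)\<^sup>2) = 0"
        using c0 sum_nonneg_eq_0_iff[OF fS, of "\<lambda>j. (\<Sum>r<p j. (V j r)\<^sup>2) + (\<Sum>r<q j. (U j r)\<^sup>2)"] j
        by (simp add: add_nonneg_nonneg sum_nonneg)
      then have "(\<Sum>r<p j. (V j r)\<^sup>2) = 0" "(\<Sum>r<q j. (U j r)\<^sup>2) = 0"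
        by (simp_all add: add_nonneg_eq_0_iff sum_nonneg)
      then have "\<forall>r<p j. V j r = 0" "\<forall>r<q j. U j r = 0"
        by (simp_all add: sum_nonneg_eq_0_iff)
      then show ?thesis by (simp add: X_def Y_def)
    qed
    then have "(\<Sum>j\<in>S. X j + Y j) = 0" by simp
    then show ?thesis using rhs Ld True in0 sg S_def by simp
  next
    case False
    define t where "t = s\<^sup>2 / \<sigma> i"
    have t0: "0 < t" using False sg by (simp add: t_def)
    have "-(t/2*(\<Sum>r<p j. (dn j r)\<^sup>2) + (\<Sum>r<p j. (V j r)\<^sup>2)/(2*t))
          -(t/2*(\<Sum>r<q j. (dm j r)\<^sup>2) + (\<Sum>r<q j. (U j r)\<^sup>2)/(2*t)) \<le> X j + Y j" for j
    proof -
      have "-(t/2*(\<Sum>r<p j. (dn j r)\<^sup>2) + (\<Sum>r<p j. (V j r)\<^sup>2)/(2*t)) \<le> X j"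
        unfolding X_def by (rule amgm_sum[OF t0])
      moreover have "-(t/2*(\<Sum>r<q j. (dm j r)\<^sup>2) + (\<Sum>r<q j. (U j r)\<^sup>2)/(2*t)) \<le> Y j"
        unfolding Y_def by (rule amgm_sum[OF t0])
      ultimately show ?thesis by linarith
    qed
    then have "(\<Sum>j\<in>S. -(t/2*(\<Sum>r<p j. (dn j r)\<^sup>2) + (\<Sum>r<p j. (V j r)\<^sup>2)/(2*t))
          -(t/2*(\<Sum>r<q j. (dm j r)\<^sup>2) + (\<Sum>r<q j. (U j r)\<^sup>2)/(2*t))) \<le> (\<Sum>j\<in>S. X j + Y j)"
      by (rule sum_mono)
    moreover have "(\<Sum>j\<in>S. -(t/2*(\<Sum>r<p j. (dn j r)\<^sup>2) + (\<Sum>r<p j. (V j r)\<^sup>2)/(2*t))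
          -(t/2*(\<Sum>r<q j. (dm j r)\<^sup>2) + (\<Sum>r<q j. (U j r)\<^sup>2)/(2*t)))
       = -(t/2*NN) - colval Mb n p q A C E i x/(2*t)"
      unfolding cv NN_def
      by (simp add: sum_negf sum.distrib sum_distrib_left sum_divide_distrib sum_subtractf
          algebra_simps add_divide_distrib)
    moreover have "colval Mb n p q A C E i x/(2*t) \<le> \<sigma> i/2 * innern (n i) x x"
    proof -
      have "colval Mb n p q A C E i x/(2*t) \<le> s\<^sup>2 * innern (n i) x x / (2*t)"
        using cb t0 by (simp add: divide_right_mono)
      also have "\<dots> = \<sigma> i/2 * innern (n i) x x" using False sg by (simp add: t_def field_simps)
      finally show ?thesis .
    qed
    ultimately show ?thesis using rhs Ld by (simp add: t_def S_def NN_def)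
  qed
qed




lemma swap3: "(\<Sum>j<Mb. \<Sum>r<(p::nat\<Rightarrow>nat) j. (d j r::real) * (\<Sum>i<M. F i j r)) = (\<Sum>i<M. \<Sum>j<Mb. \<Sum>r<p j. d j r * F i j r)"
proof -
  have "(\<Sum>j<Mb. \<Sum>r<p j. d j r * (\<Sum>i<M. F i j r)) = (\<Sum>j<Mb. \<Sum>r<p j. \<Sum>i<M. d j r * F i j r)"
    by (simp add: sum_distrib_left)
  also have "\<dots> = (\<Sum>j<Mb. \<Sum>i<M. \<Sum>r<p j. d j r * F i j r)"
    by (intro sum.cong refl sum.swap)
  also have "\<dots> = (\<Sum>i<M. \<Sum>j<Mb. \<Sum>r<p j. d j r * F i j r)"
    by (rule sum.swap)
  finally show ?thesis .
qed

lemma filt: "(\<Sum>j\<in>{j. j<m \<and> P j}. g j) = (\<Sum>j<(m::nat). if P j then (g j::real) else 0)"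
proof -
  have "{j. j<m \<and> P j} = {j\<in>{..<m}. P j}" by auto
  then show ?thesis by (simp only:) (rule sum.inter_filter, simp)
qed


lemma wswap: fixes M Mb :: nat and N :: "nat \<Rightarrow> real" shows "(\<Sum>i<M. (LL::nat\<Rightarrow>real) i * (\<Sum>j\<in>{j. j<Mb \<and> E j i}. N j)) = (\<Sum>j<Mb. (\<Sum>i\<in>{i. i<M \<and> E j i}. LL i) * N j)"
proof -
  have a: "LL i * (\<Sum>j\<in>{j. j<Mb \<and> E j i}. N j) = (\<Sum>j<Mb. if E j i then LL i * N j else 0)" for i
    by (subst filt) (simp only: sum_distrib_left if_distrib mult_zero_right)
  have b: "(\<Sum>i\<in>{i. i<M \<and> E j i}. LL i) * N j = (\<Sum>i<M. if E j i then LL i * N j else 0)" for j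
    by (subst filt, subst sum_distrib_right, rule sum.cong, simp_all)
  show ?thesis unfolding a b by (rule sum.swap)
qed

lemma cross:
  fixes M Mb :: nat and n p q :: "nat \<Rightarrow> nat" and A C :: "nat \<Rightarrow> nat \<Rightarrow> nat \<Rightarrow> nat \<Rightarrow> real"
    and E :: "nat \<Rightarrow> nat \<Rightarrow> bool" and \<sigma> :: "nat \<Rightarrow> real"
    and dn dm :: "nat \<Rightarrow> nat \<Rightarrow> real" and w :: "nat \<Rightarrow> nat \<Rightarrow> real"
  assumes sparsity: "\<forall>j<Mb. \<forall>i<M. \<not> E j i \<longrightarrow>
      (\<forall>r<p j. \<forall>k<n i. A j i r k = 0) \<and> (\<forall>r<q j. \<forall>k<n i. C j i r k = 0)"
    and sigma_pos: "\<forall>i<M. 0 < \<sigma> i"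
    and w: "\<forall>i<M. w i \<in> vecs (n i)"
  shows "-(\<Sum>i<M. \<sigma> i/2 * innern (n i) (w i) (w i)) - 1/2 * Wnorm_sq M Mb n p q A C E \<sigma> dn dm
     \<le> (\<Sum>j<Mb. \<Sum>r<p j. dn j r * blk_mult M n A w j r) + (\<Sum>j<Mb. \<Sum>r<q j. dm j r * blk_mult M n C w j r)"
proof -
  define NN where "NN j = (\<Sum>r<p j. (dn j r)\<^sup>2) + (\<Sum>r<q j. (dm j r)\<^sup>2)" for j
  have rhs: "(\<Sum>j<Mb. \<Sum>r<p j. dn j r * blk_mult M n A w j r) + (\<Sum>j<Mb. \<Sum>r<q j. dm j r * blk_mult M n C w j r)
     = (\<Sum>i<M. (\<Sum>j<Mb. \<Sum>r<p j. dn j r * (\<Sum>k<n i. A j i r k * w i k))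
      + (\<Sum>j<Mb. \<Sum>r<q j. dm j r * (\<Sum>k<n i. C j i r k * w i k)))"
    unfolding blk_mult_def swap3 sum.distrib ..
  have "(\<Sum>i<M. -(\<sigma> i/2 * innern (n i) (w i) (w i)) - Ld Mb n p q A C E \<sigma> i/2 *
      (\<Sum>j\<in>{j. j<Mb \<and> E j i}. NN j))
    \<le> (\<Sum>i<M. (\<Sum>j<Mb. \<Sum>r<p j. dn j r * (\<Sum>k<n i. A j i r k * w i k))
      + (\<Sum>j<Mb. \<Sum>r<q j. dm j r * (\<Sum>k<n i. C j i r k * w i k)))"
  proof (rule sum_mono)
    fix i assume i: "i \<in> {..<M}"
    show "-(\<sigma> i/2 * innern (n i) (w i) (w i)) - Ld Mb n p q A C E \<sigma> i/2 *
      (\<Sum>j\<in>{j. j<Mb \<and> E j i}. NN j)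
    \<le> (\<Sum>j<Mb. \<Sum>r<p j. dn j r * (\<Sum>k<n i. A j i r k * w i k))
      + (\<Sum>j<Mb. \<Sum>r<q j. dm j r * (\<Sum>k<n i. C j i r k * w i k))"
      unfolding NN_def
      using cross_i[where Mb=Mb and E=E and p=p and n=n and A=A and i=i and q=q and C=C and \<sigma>=\<sigma> and x="w i" and dn=dn and dm=dm] i sparsity sigma_pos w by auto
  qed
  moreover have "(\<Sum>i<M. -(\<sigma> i/2 * innern (n i) (w i) (w i)) - Ld Mb n p q A C E \<sigma> i/2 *
      (\<Sum>j\<in>{j. j<Mb \<and> E j i}. NN j))
     = -(\<Sum>i<M. \<sigma> i/2 * innern (n i) (w i) (w i)) - 1/2 * (\<Sum>i<M. Ld Mb n p q A C E \<sigma> i *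
      (\<Sum>j\<in>{j. j<Mb \<and> E j i}. NN j))"
    by (simp add: sum_subtractf sum_negf sum_distrib_left)
  moreover have "(\<Sum>i<M. Ld Mb n p q A C E \<sigma> i * (\<Sum>j\<in>{j. j<Mb \<and> E j i}. NN j))
      = Wnorm_sq M Mb n p q A C E \<sigma> dn dm"
    unfolding wswap Wnorm_sq_def Wweight_def NN_def ..
  ultimately show ?thesis using rhs by simp
qed




lemma zdom_vecs: "z \<in> zdom M n \<Longrightarrow> i < M \<Longrightarrow> z i \<in> vecs (n i)"
  by (auto simp: zdom_def vecs_def)

lemma zdom_combo: "x \<in> zdom M n \<Longrightarrow> y \<in> zdom M n \<Longrightarrow> (\<lambda>i k. t * x i k + s * y i k) \<in> zdom M n"
  by (auto simp: zdom_def)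

lemma blk_combo: "blk_mult M n A (\<lambda>i k. t * x i k + s * y i k) j r = t * blk_mult M n A x j r + s * blk_mult M n A y j r"
  by (simp add: blk_mult_def algebra_simps sum.distrib sum_distrib_left)

lemma blk_diff: "blk_mult M n A (\<lambda>i k. x i k - y i k) j r = blk_mult M n A x j r - blk_mult M n A y j r"
  by (simp add: blk_mult_def algebra_simps sum_subtractf)

lemma lin_combo:
  fixes \<nu> X Y b :: "nat \<Rightarrow> nat \<Rightarrow> real"
  shows "(\<Sum>j<Mb. \<Sum>r<p j. \<nu> j r * (t * X j r + (1-t) * Y j r - b j r))
     = t * (\<Sum>j<Mb. \<Sum>r<p j. \<nu> j r * (X j r - b j r)) + (1-t) * (\<Sum>j<Mb. \<Sum>r<p j. \<nu> j r * (Y j r - b j r))"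
proof -
  have "t * (\<Sum>j<Mb. \<Sum>r<p j. \<nu> j r * (X j r - b j r)) + (1-t) * (\<Sum>j<Mb. \<Sum>r<p j. \<nu> j r * (Y j r - b j r))
     = (\<Sum>j<Mb. \<Sum>r<p j. t * (\<nu> j r * (X j r - b j r)) + (1-t) * (\<nu> j r * (Y j r - b j r)))"
    by (simp add: sum_distrib_left sum.distrib)
  also have "\<dots> = (\<Sum>j<Mb. \<Sum>r<p j. \<nu> j r * (t * X j r + (1-t) * Y j r - b j r))"
    by (intro sum.cong refl) (simp add: algebra_simps)
  finally show ?thesis by simp
qed

locale setting =
  fixes M Mb :: nat and n p q :: "nat \<Rightarrow> nat"
    and A C :: "nat \<Rightarrow> nat \<Rightarrow> nat \<Rightarrow> nat \<Rightarrow> real"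
    and b c :: "nat \<Rightarrow> nat \<Rightarrow> real"
    and E :: "nat \<Rightarrow> nat \<Rightarrow> bool"
    and f :: "nat \<Rightarrow> (nat \<Rightarrow> real) \<Rightarrow> real"
    and \<sigma> L :: "nat \<Rightarrow> real"
  assumes sparsity: "\<forall>j<Mb. \<forall>i<M. \<not> E j i \<longrightarrow>
      (\<forall>r<p j. \<forall>k<n i. A j i r k = 0) \<and> (\<forall>r<q j. \<forall>k<n i. C j i r k = 0)"
    and sigma_pos: "\<forall>i<M. 0 < \<sigma> i"
    and strong: "\<forall>i<M. strongly_convex_vec (n i) (f i) (\<sigma> i)"
    and lipgrad: "\<forall>i<M. lipschitz_grad_vec (n i) (f i) (L i)"
begin

abbreviation "Lg z \<nu> \<mu> \<equiv> lagrangian M Mb n p q A C b c f z \<nu> \<mu>"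

definition S where "S x y = (\<Sum>i<M. \<sigma> i/2 * innern (n i) (\<lambda>k. x i k - y i k) (\<lambda>k. x i k - y i k))"

lemma S_nonneg: "0 \<le> S x y"
  unfolding S_def using sigma_pos by (intro sum_nonneg mult_nonneg_nonneg innern_nonneg) auto

lemma lag_convex:
  assumes x: "x \<in> zdom M n" and y: "y \<in> zdom M n" and t: "0 \<le> t" "t \<le> 1"
  shows "Lg (\<lambda>i k. t * x i k + (1-t) * y i k) \<nu> \<mu> \<le> t * Lg x \<nu> \<mu> + (1-t) * Lg y \<nu> \<mu> - t*(1-t) * S x y"
proof -
  have F: "(\<Sum>i<M. f i (\<lambda>k. t * x i k + (1-t) * y i k))
     \<le> (\<Sum>i<M. t * f i (x i) + (1-t) * f i (y i) - \<sigma> i / 2 * t * (1 - t) * (normn (n i) (\<lambda>k. x i k - y i k))\<^sup>2)"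
  proof (rule sum_mono)
    fix i assume "i \<in> {..<M}"
    then have "i < M" by simp
    then show "f i (\<lambda>k. t * x i k + (1-t) * y i k)
       \<le> t * f i (x i) + (1-t) * f i (y i) - \<sigma> i / 2 * t * (1 - t) * (normn (n i) (\<lambda>k. x i k - y i k))\<^sup>2"
      using strong zdom_vecs[OF x] zdom_vecs[OF y] t unfolding strongly_convex_vec_def by blast
  qed
  have F2: "(\<Sum>i<M. t * f i (x i) + (1-t) * f i (y i) - \<sigma> i / 2 * t * (1 - t) * (normn (n i) (\<lambda>k. x i k - y i k))\<^sup>2)
     = t * (\<Sum>i<M. f i (x i)) + (1-t) * (\<Sum>i<M. f i (y i)) - t*(1-t) * S x y"
    by (simp add: S_def normn_sq sum.distrib sum_subtractf sum_distrib_left algebra_simps)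
  show ?thesis
    unfolding lagrangian_def blk_combo lin_combo using F F2 by (simp add: algebra_simps)
qed

end




context setting begin

lemma grads_ex: "\<exists>G. \<forall>i. i < M \<longrightarrow> (\<forall>x\<in>vecs (n i). has_grad_vec (n i) (f i) (G i x) x)"
proof -
  have "\<forall>i. \<exists>g. i < M \<longrightarrow> (\<forall>x\<in>vecs (n i). has_grad_vec (n i) (f i) (g x) x)"
    using lipgrad unfolding lipschitz_grad_vec_def by blast
  then show ?thesis by (rule choice)
qed

lemma grads: obtains G where "\<And>i x. i < M \<Longrightarrow> x \<in> vecs (n i) \<Longrightarrow> has_grad_vec (n i) (f i) (G i x) x"
proof -
  obtain G where "\<forall>i. i < M \<longrightarrow> (\<forall>x\<in>vecs (n i). has_grad_vec (n i) (f i) (G i x) x)"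
    using grads_ex by blast
  then show ?thesis by (intro that) auto
qed

lemma lower_bound: "\<exists>K. \<forall>z\<in>zdom M n. K \<le> Lg z \<nu> \<mu>"
proof -
  obtain G where G0: "\<forall>i. i < M \<longrightarrow> (\<forall>x\<in>vecs (n i). has_grad_vec (n i) (f i) (G i x) x)"
    using grads_ex by blast
  have G: "has_grad_vec (n i) (f i) (G i x) x" if "i < M" "x \<in> vecs (n i)" for i x
    using G0 that by blast
  define g0 where "g0 i = G i (\<lambda>k. 0)" for i
  have z0: "(\<lambda>k. 0) \<in> vecs m" for m by (simp add: vecs_def)
  define cst where "cst = (\<Sum>j<Mb. \<Sum>r<p j. \<nu> j r * b j r) + (\<Sum>j<Mb. \<Sum>r<q j. \<mu> j r * c j r)"
  define Wq where "Wq = Wnorm_sq M Mb n p q A C E \<sigma> (\<lambda>j r. 2 * \<nu> j r) (\<lambda>j r. 2 * \<mu> j r)"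
  define P1 where "P1 = (\<Sum>i<M. f i (\<lambda>k. 0))"
  define Q where "Q = (\<Sum>i<M. \<Sum>k<n i. (g0 i k)\<^sup>2 / \<sigma> i)"
  have "P1 - Q - Wq/4 - cst \<le> Lg z \<nu> \<mu>" if z: "z \<in> zdom M n" for z
  proof -
    define Fz where "Fz = (\<Sum>i<M. f i (z i))"
    define Lz where "Lz = (\<Sum>j<Mb. \<Sum>r<p j. \<nu> j r * blk_mult M n A z j r) + (\<Sum>j<Mb. \<Sum>r<q j. \<mu> j r * blk_mult M n C z j r)"
    define P2 where "P2 = (\<Sum>i<M. innern (n i) (g0 i) (z i))"
    define P3 where "P3 = (\<Sum>i<M. \<sigma> i/4 * innern (n i) (z i) (z i))"
    have eq: "Lg z \<nu> \<mu> = Fz + Lz - cst"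
      by (simp add: lagrangian_def Fz_def Lz_def cst_def sum_subtractf right_diff_distrib)
    have zv: "\<forall>i<M. z i \<in> vecs (n i)" using zdom_vecs[OF z] by blast
    note cr0 = cross[OF sparsity sigma_pos zv, of "\<lambda>j r. 2 * \<nu> j r" "\<lambda>j r. 2 * \<mu> j r"]
    have "(\<Sum>i<M. \<sigma> i/2 * innern (n i) (z i) (z i)) = 2 * P3"
      by (simp add: P3_def sum_distrib_left)
    moreover have "(\<Sum>j<Mb. \<Sum>r<p j. 2 * \<nu> j r * blk_mult M n A z j r) + (\<Sum>j<Mb. \<Sum>r<q j. 2 * \<mu> j r * blk_mult M n C z j r) = 2 * Lz"
      by (simp add: Lz_def sum_distrib_left mult.assoc)
    ultimately have cr: "-(2*P3) - Wq/2 \<le> 2 * Lz" using cr0 by (simp add: Wq_def)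
    have fb: "P1 + P2 + 2*P3 \<le> Fz"
    proof -
      have "(\<Sum>i<M. f i (\<lambda>k. 0) + innern (n i) (g0 i) (z i) + \<sigma> i/2 * innern (n i) (z i) (z i)) \<le> Fz"
        unfolding Fz_def
      proof (rule sum_mono)
        fix i assume "i \<in> {..<M}"
        then have i: "i < M" by simp
        have "f i (\<lambda>k. 0) + innern (n i) (g0 i) (\<lambda>k. z i k - 0) + \<sigma> i/2 * innern (n i) (\<lambda>k. z i k - 0) (\<lambda>k. z i k - 0) \<le> f i (z i)"
          using grad_ineq[OF _ G[OF i z0]] strong i zv unfolding g0_def by (simp add: z0)
        then show "f i (\<lambda>k. 0) + innern (n i) (g0 i) (z i) + \<sigma> i/2 * innern (n i) (z i) (z i) \<le> f i (z i)"
          by simp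
      qed
      moreover have "(\<Sum>i<M. f i (\<lambda>k. 0) + innern (n i) (g0 i) (z i) + \<sigma> i/2 * innern (n i) (z i) (z i)) = P1 + P2 + 2*P3"
        by (simp add: P1_def P2_def P3_def sum.distrib sum_distrib_left)
      ultimately show ?thesis by simp
    qed
    have qb: "-Q \<le> P2 + P3"
    proof -
      have "(\<Sum>i<M. -(\<Sum>k<n i. (g0 i k)\<^sup>2 / \<sigma> i)) \<le> (\<Sum>i<M. innern (n i) (g0 i) (z i) + \<sigma> i/4 * innern (n i) (z i) (z i))"
      proof (rule sum_mono)
        fix i assume "i \<in> {..<M}"
        then have s: "0 < \<sigma> i/2" using sigma_pos by simp
        have "-(\<sigma> i/2/2*(\<Sum>k<n i. (z i k)\<^sup>2) + (\<Sum>k<n i. (g0 i k)\<^sup>2)/(2*(\<sigma> i/2))) \<le> (\<Sum>k<n i. z i k * g0 i k)"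
          by (rule amgm_sum[OF s])
        then show "-(\<Sum>k<n i. (g0 i k)\<^sup>2 / \<sigma> i) \<le> innern (n i) (g0 i) (z i) + \<sigma> i/4 * innern (n i) (z i) (z i)"
          by (simp add: innern_def sum_divide_distrib power2_eq_square mult.commute)
      qed
      then show ?thesis by (simp add: Q_def P2_def P3_def sum.distrib sum_negf)
    qed
    have "0 \<le> Wq" unfolding Wq_def Wnorm_sq_def Wweight_def Ld_def using sigma_pos
      by (intro sum_nonneg mult_nonneg_nonneg add_nonneg_nonneg) auto
    show ?thesis using eq cr fb qb by linarith
  qed
  then show ?thesis by blast
qed

end



context setting begin

lemma growth:
  assumes zs: "zs \<in> zdom M n" and mn: "\<forall>z'\<in>zdom M n. Lg zs \<nu> \<mu> \<le> Lg z' \<nu> \<mu>"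
    and z: "z \<in> zdom M n"
  shows "Lg zs \<nu> \<mu> + S z zs \<le> Lg z \<nu> \<mu>"
proof (rule ccontr)
  define D where "D = Lg z \<nu> \<mu> - Lg zs \<nu> \<mu>"
  define SS where "SS = S z zs"
  assume "\<not> ?thesis"
  then have DS: "D < SS" by (simp add: D_def SS_def)
  have D0: "0 \<le> D" using mn z by (simp add: D_def)
  have S0: "0 < SS" using DS D0 by simp
  define t where "t = (SS - D) / (2*SS)"
  have t0: "0 < t" using DS S0 by (simp add: t_def)
  have t1: "t \<le> 1" using DS S0 D0 by (simp add: t_def field_simps)
  have "Lg (\<lambda>i k. t * z i k + (1-t) * zs i k) \<nu> \<mu> \<le> t * Lg z \<nu> \<mu> + (1-t) * Lg zs \<nu> \<mu> - t*(1-t) * SS"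
    unfolding SS_def using lag_convex[OF z zs] t0 t1 by simp
  moreover have "Lg zs \<nu> \<mu> \<le> Lg (\<lambda>i k. t * z i k + (1-t) * zs i k) \<nu> \<mu>"
    using mn zdom_combo[OF z zs] by blast
  ultimately have "0 \<le> t * D - t * ((1-t) * SS)" by (simp add: D_def algebra_simps)
  then have "t * ((1-t) * SS) \<le> t * D" by simp
  then have "(1-t) * SS \<le> D" using t0 by simp
  moreover have "(1-t) * SS = (SS + D)/2" using S0 by (simp add: t_def field_simps)
  ultimately show False using DS by simp
qed

lemma unique_min:
  assumes x: "x \<in> zdom M n" and mx: "\<forall>z'\<in>zdom M n. Lg x \<nu> \<mu> \<le> Lg z' \<nu> \<mu>"
    and y: "y \<in> zdom M n" and my: "\<forall>z'\<in>zdom M n. Lg y \<nu> \<mu> \<le> Lg z' \<nu> \<mu>"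
  shows "y = x"
proof -
  have "Lg x \<nu> \<mu> + S y x \<le> Lg y \<nu> \<mu>" by (rule growth[OF x mx y])
  moreover have "Lg y \<nu> \<mu> \<le> Lg x \<nu> \<mu>" using my x by blast
  ultimately have "S y x \<le> 0" by simp
  then have S0: "S y x = 0" using S_nonneg[of y x] by simp
  have "\<forall>i\<in>{..<M}. \<sigma> i/2 * innern (n i) (\<lambda>k. y i k - x i k) (\<lambda>k. y i k - x i k) = 0"
    using S0 unfolding S_def using sigma_pos
    by (subst sum_nonneg_eq_0_iff[symmetric]) (auto intro!: mult_nonneg_nonneg innern_nonneg)
  then have "\<forall>i<M. innern (n i) (\<lambda>k. y i k - x i k) (\<lambda>k. y i k - x i k) = 0"
  proof (intro allI impI)
    fix i assume i: "i < M"
    assume H: "\<forall>i\<in>{..<M}. \<sigma> i/2 * innern (n i) (\<lambda>k. y i k - x i k) (\<lambda>k. y i k - x i k) = 0"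
    then have "\<sigma> i/2 * innern (n i) (\<lambda>k. y i k - x i k) (\<lambda>k. y i k - x i k) = 0" using i by simp
    moreover have "0 < \<sigma> i" using sigma_pos i by blast
    ultimately show "innern (n i) (\<lambda>k. y i k - x i k) (\<lambda>k. y i k - x i k) = 0" by simp
  qed
  then have "\<forall>i<M. \<forall>k\<in>{..<n i}. (y i k - x i k) * (y i k - x i k) = 0"
    unfolding innern_def by (subst (asm) sum_nonneg_eq_0_iff) auto
  then have "\<forall>i<M. \<forall>k<n i. y i k = x i k" by auto
  then have e: "\<forall>i<M. \<forall>k<n i. y i k = x i k" .
  show ?thesis
  proof (intro ext)
    fix i k show "y i k = x i k"
    proof (cases "i < M \<and> k < n i")
      case True then show ?thesis using e by simp
    next
      case False
      then have "x i k = 0" "y i k = 0" using x y unfolding zdom_def by auto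
      then show ?thesis by simp
    qed
  qed
qed

end



lemma cauchy_aux:
  fixes X :: "nat \<Rightarrow> real"
  assumes s: "0 < s" and B: "\<And>k l. (X k - X l)\<^sup>2 \<le> s * (inverse (real (Suc k)) + inverse (real (Suc l)))"
  shows "Cauchy X"
proof (rule metric_CauchyI)
  fix e :: real assume e: "0 < e"
  obtain N where N: "2 * s / e\<^sup>2 < real N" using reals_Archimedean2 by blast
  have pos: "0 < 2 * s / e\<^sup>2" using s e by simp
  have iN: "inverse (real (Suc N)) < e\<^sup>2 / (2*s)"
  proof -
    have "2 * s / e\<^sup>2 < real (Suc N)" using N by simp
    then have "inverse (real (Suc N)) < inverse (2 * s / e\<^sup>2)"
      using pos by (intro less_imp_inverse_less) auto
    then show ?thesis by simp
  qed
  show "\<exists>N. \<forall>m\<ge>N. \<forall>n\<ge>N. dist (X m) (X n) < e"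
  proof (intro exI allI impI)
    fix k l assume k: "N \<le> k" and l: "N \<le> l"
    have ik: "inverse (real (Suc k)) \<le> inverse (real (Suc N))" using k by (simp add: le_imp_inverse_le)
    have il: "inverse (real (Suc l)) \<le> inverse (real (Suc N))" using l by (simp add: le_imp_inverse_le)
    have "(X k - X l)\<^sup>2 \<le> s * (inverse (real (Suc k)) + inverse (real (Suc l)))" by (rule B)
    also have "\<dots> \<le> s * (2 * inverse (real (Suc N)))"
    proof -
      have "inverse (real (Suc k)) + inverse (real (Suc l)) \<le> 2 * inverse (real (Suc N))" using ik il by linarith
      then show ?thesis using s by (intro mult_left_mono) auto
    qed
    also have "\<dots> < s * (2 * (e\<^sup>2 / (2*s)))" using iN s by (intro mult_strict_left_mono) auto
    also have "\<dots> = e\<^sup>2" using s by simp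
    finally have "(X k - X l)\<^sup>2 < e\<^sup>2" .
    then have sq: "\<bar>X k - X l\<bar>\<^sup>2 < e\<^sup>2" by simp
    have "\<bar>X k - X l\<bar> < e" using power2_less_imp_less[OF sq] e by simp
    then show "dist (X k) (X l) < e" by (simp add: dist_real_def)
  qed
qed

context setting begin

lemma exists_min: "\<exists>z\<in>zdom M n. \<forall>z'\<in>zdom M n. Lg z \<nu> \<mu> \<le> Lg z' \<nu> \<mu>"
proof -
  define \<Phi> where "\<Phi> z = Lg z \<nu> \<mu>" for z
  define m0 where "m0 = (INF z\<in>zdom M n. \<Phi> z)"
  have ne: "(\<lambda>i k. 0) \<in> zdom M n" by (simp add: zdom_def)
  obtain K where K: "\<forall>z\<in>zdom M n. K \<le> \<Phi> z" using lower_bound unfolding \<Phi>_def by blast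
  have bdd: "bdd_below (\<Phi> ` zdom M n)" using K by (auto intro: bdd_belowI2)
  have lowm: "m0 \<le> \<Phi> z" if "z \<in> zdom M n" for z unfolding m0_def using bdd that by (rule cINF_lower)
  have "\<exists>z\<in>zdom M n. \<Phi> z < m0 + inverse (real (Suc k))" for k
  proof (rule ccontr)
    assume "\<not> ?thesis"
    then have "m0 + inverse (real (Suc k)) \<le> \<Phi> z" if "z \<in> zdom M n" for z using that by force
    then have "m0 + inverse (real (Suc k)) \<le> m0" unfolding m0_def using ne by (intro cINF_greatest) auto
    then show False by simp
  qed
  then obtain zs where zs: "\<And>k. zs k \<in> zdom M n" and zsl: "\<And>k. \<Phi> (zs k) < m0 + inverse (real (Suc k))"
    by metis
  define iv where "iv k = inverse (real (Suc k))" for k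
  have Sb: "S (zs k) (zs l) \<le> 2 * (iv k + iv l)" for k l
  proof -
    define mid where "mid = (\<lambda>i c. (1/2) * zs k i c + (1 - 1/2) * zs l i c)"
    have "\<Phi> mid \<le> 1/2 * \<Phi> (zs k) + (1 - 1/2) * \<Phi> (zs l) - 1/2*(1 - 1/2) * S (zs k) (zs l)"
      unfolding mid_def \<Phi>_def by (rule lag_convex[OF zs zs]) auto
    moreover have "m0 \<le> \<Phi> mid" using lowm zdom_combo[OF zs zs] unfolding mid_def by blast
    ultimately show ?thesis using zsl[of k] zsl[of l] unfolding iv_def by simp
  qed
  have coord: "(zs k i c - zs l i c)\<^sup>2 \<le> (4 / \<sigma> i) * (iv k + iv l)" if i: "i < M" and c: "c < n i" for k l i c
  proof -
    have si: "0 < \<sigma> i" using sigma_pos i by blast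
    have "\<sigma> i/2 * (zs k i c - zs l i c)\<^sup>2 \<le> \<sigma> i/2 * innern (n i) (\<lambda>c. zs k i c - zs l i c) (\<lambda>c. zs k i c - zs l i c)"
      using si coord_le[OF c, of "\<lambda>c. zs k i c - zs l i c"] by simp
    also have "\<dots> \<le> S (zs k) (zs l)" unfolding S_def
      using i sigma_pos by (intro member_le_sum[where f="\<lambda>i. \<sigma> i/2 * innern (n i) (\<lambda>c. zs k i c - zs l i c) (\<lambda>c. zs k i c - zs l i c)"]
          mult_nonneg_nonneg innern_nonneg) auto
    also have "\<dots> \<le> 2 * (iv k + iv l)" by (rule Sb)
    finally have "\<sigma> i/2 * (zs k i c - zs l i c)\<^sup>2 \<le> 2 * (iv k + iv l)" .
    then show ?thesis using si by (simp add: field_simps)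
  qed
  have conv: "convergent (\<lambda>k. zs k i c)" for i c
  proof (cases "i < M \<and> c < n i")
    case True
    have "0 < 4 / \<sigma> i" using sigma_pos True by simp
    then have "Cauchy (\<lambda>k. zs k i c)"
      by (rule cauchy_aux) (use coord True in \<open>simp add: iv_def\<close>)
    then show ?thesis by (simp add: Cauchy_convergent_iff)
  next
    case False
    then have "(\<lambda>k. zs k i c) = (\<lambda>k. 0)" using zs unfolding zdom_def by auto
    then show ?thesis by (simp add: convergent_const)
  qed
  define zl where "zl i c = lim (\<lambda>k. zs k i c)" for i c
  have lim: "(\<lambda>k. zs k i c) \<longlonglongrightarrow> zl i c" for i c
    using conv[of i c] by (simp add: convergent_LIMSEQ_iff zl_def)
  have zl: "zl \<in> zdom M n"
    unfolding zdom_def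
  proof (intro CollectI allI impI)
    fix i c assume nc: "\<not> (i < M \<and> c < n i)"
    then have "(\<lambda>k. zs k i c) = (\<lambda>k. 0)" using zs unfolding zdom_def by auto
    then have "(\<lambda>k. 0::real) \<longlonglongrightarrow> zl i c" using lim[of i c] by simp
    then show "zl i c = 0" using LIMSEQ_unique tendsto_const by blast
  qed
  obtain G where G0: "\<forall>i. i < M \<longrightarrow> (\<forall>x\<in>vecs (n i). has_grad_vec (n i) (f i) (G i x) x)"
    using grads_ex by blast
  have fpart: "(\<lambda>k. \<Sum>i<M. f i (zs k i)) \<longlonglongrightarrow> (\<Sum>i<M. f i (zl i))"
  proof (rule tendsto_sum)
    fix i assume "i \<in> {..<M}"
    then have i: "i < M" by simp
    show "(\<lambda>k. f i (zs k i)) \<longlonglongrightarrow> f i (zl i)"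
      using grad_cont[of "n i" "f i" "G i (zl i)" "zl i" "\<lambda>k. zs k i"] G0 i zdom_vecs[OF zl i] zdom_vecs[OF zs i] lim
      by blast
  qed
  have t1: "(\<lambda>k. \<Phi> (zs k)) \<longlonglongrightarrow> \<Phi> zl"
    unfolding \<Phi>_def lagrangian_def blk_mult_def
    by (intro tendsto_add fpart; intro tendsto_intros lim)
  have t2: "(\<lambda>k. \<Phi> (zs k)) \<longlonglongrightarrow> m0"
  proof (rule tendsto_sandwich[of "\<lambda>k. m0" _ _ "\<lambda>k. m0 + inverse (real (Suc k))"])
    show "eventually (\<lambda>k. m0 \<le> \<Phi> (zs k)) sequentially" using lowm zs by simp
    show "eventually (\<lambda>k. \<Phi> (zs k) \<le> m0 + inverse (real (Suc k))) sequentially"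
      using zsl by (simp add: less_imp_le)
    show "(\<lambda>k. m0) \<longlonglongrightarrow> m0" by simp
    show "(\<lambda>k. m0 + inverse (real (Suc k))) \<longlonglongrightarrow> m0" by (rule LIMSEQ_inverse_real_of_nat_add)
  qed
  have "\<Phi> zl = m0" using t1 t2 by (rule LIMSEQ_unique)
  then show ?thesis using zl lowm unfolding \<Phi>_def by auto
qed

end



lemma lin_shift:
  fixes \<nu> \<nu>' X Xs b :: "nat \<Rightarrow> nat \<Rightarrow> real"
  shows "(\<Sum>j<Mb. \<Sum>r<p j. \<nu> j r * (X j r - b j r))
    = (\<Sum>j<Mb. \<Sum>r<p j. \<nu>' j r * (X j r - b j r))
      + (\<Sum>j<Mb. \<Sum>r<p j. (Xs j r - b j r) * (\<nu> j r - \<nu>' j r))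
      + (\<Sum>j<Mb. \<Sum>r<p j. (\<nu> j r - \<nu>' j r) * (X j r - Xs j r))"
proof -
  have "(\<Sum>j<Mb. \<Sum>r<p j. \<nu>' j r * (X j r - b j r))
      + (\<Sum>j<Mb. \<Sum>r<p j. (Xs j r - b j r) * (\<nu> j r - \<nu>' j r))
      + (\<Sum>j<Mb. \<Sum>r<p j. (\<nu> j r - \<nu>' j r) * (X j r - Xs j r))
    = (\<Sum>j<Mb. \<Sum>r<p j. \<nu>' j r * (X j r - b j r) + (Xs j r - b j r) * (\<nu> j r - \<nu>' j r)
         + (\<nu> j r - \<nu>' j r) * (X j r - Xs j r))"
    by (simp add: sum.distrib)
  also have "\<dots> = (\<Sum>j<Mb. \<Sum>r<p j. \<nu> j r * (X j r - b j r))"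
    by (intro sum.cong refl) (simp add: algebra_simps)
  finally show ?thesis by simp
qed

context setting begin

lemma zopt_min:
  "zopt M Mb n p q A C b c f \<nu> \<mu> \<in> zdom M n \<and>
   (\<forall>z'\<in>zdom M n. Lg (zopt M Mb n p q A C b c f \<nu> \<mu>) \<nu> \<mu> \<le> Lg z' \<nu> \<mu>)"
proof -
  have "\<exists>!z. z \<in> zdom M n \<and> (\<forall>z'\<in>zdom M n. Lg z \<nu> \<mu> \<le> Lg z' \<nu> \<mu>)"
  proof -
    obtain z where "z \<in> zdom M n" "\<forall>z'\<in>zdom M n. Lg z \<nu> \<mu> \<le> Lg z' \<nu> \<mu>"
      using exists_min by blast
    then show ?thesis using unique_min by blast
  qed
  then show ?thesis unfolding zopt_def by (rule theI')
qed

lemma main: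
  shows "dual_fun M Mb n p q A C b c f \<nu> \<mu>
     \<ge> dual_fun M Mb n p q A C b c f \<nu>' \<mu>'
        + ((\<Sum>j<Mb. \<Sum>r<p j. dual_grad_nu M Mb n p q A C b c f \<nu>' \<mu>' j r * (\<nu> j r - \<nu>' j r))
           + (\<Sum>j<Mb. \<Sum>r<q j. dual_grad_mu M Mb n p q A C b c f \<nu>' \<mu>' j r * (\<mu> j r - \<mu>' j r)))
        - 1/2 * Wnorm_sq M Mb n p q A C E \<sigma> (\<lambda>j r. \<nu> j r - \<nu>' j r) (\<lambda>j r. \<mu> j r - \<mu>' j r)"
proof -
  define zs where "zs = zopt M Mb n p q A C b c f \<nu>' \<mu>'"
  have zs: "zs \<in> zdom M n" and mn: "\<forall>z'\<in>zdom M n. Lg zs \<nu>' \<mu>' \<le> Lg z' \<nu>' \<mu>'"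
    using zopt_min[of \<nu>' \<mu>'] by (simp_all add: zs_def)
  define gr where "gr = (\<Sum>j<Mb. \<Sum>r<p j. dual_grad_nu M Mb n p q A C b c f \<nu>' \<mu>' j r * (\<nu> j r - \<nu>' j r))
           + (\<Sum>j<Mb. \<Sum>r<q j. dual_grad_mu M Mb n p q A C b c f \<nu>' \<mu>' j r * (\<mu> j r - \<mu>' j r))"
  define W where "W = Wnorm_sq M Mb n p q A C E \<sigma> (\<lambda>j r. \<nu> j r - \<nu>' j r) (\<lambda>j r. \<mu> j r - \<mu>' j r)"
  have ne: "(\<lambda>i k. 0) \<in> zdom M n" by (simp add: zdom_def)
  have d': "dual_fun M Mb n p q A C b c f \<nu>' \<mu>' \<le> Lg zs \<nu>' \<mu>'"
    unfolding dual_fun_def using mn zs by (intro cINF_lower bdd_belowI2[where m="Lg zs \<nu>' \<mu>'"]) auto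
  have key: "dual_fun M Mb n p q A C b c f \<nu>' \<mu>' + gr - 1/2 * W \<le> Lg z \<nu> \<mu>" if z: "z \<in> zdom M n" for z
  proof -
    define w where "w = (\<lambda>i k. z i k - zs i k)"
    have wv: "\<forall>i<M. w i \<in> vecs (n i)" using zdom_vecs[OF z] zdom_vecs[OF zs] by (auto simp: vecs_def w_def)
    define ct where "ct = (\<Sum>j<Mb. \<Sum>r<p j. (\<nu> j r - \<nu>' j r) * blk_mult M n A w j r)
       + (\<Sum>j<Mb. \<Sum>r<q j. (\<mu> j r - \<mu>' j r) * blk_mult M n C w j r)"
    have eq: "Lg z \<nu> \<mu> = Lg z \<nu>' \<mu>' + gr + ct"
      unfolding lagrangian_def gr_def ct_def dual_grad_nu_def dual_grad_mu_def w_def blk_diff zs_def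
        lin_shift[where Mb=Mb and p=p and \<nu>=\<nu> and b=b and \<nu>'=\<nu>' and Xs="blk_mult M n A (zopt M Mb n p q A C b c f \<nu>' \<mu>')"]
        lin_shift[where Mb=Mb and p=q and \<nu>=\<mu> and b=c and \<nu>'=\<mu>' and Xs="blk_mult M n C (zopt M Mb n p q A C b c f \<nu>' \<mu>')"]
      by simp
    have cr: "-(\<Sum>i<M. \<sigma> i/2 * innern (n i) (w i) (w i)) - 1/2 * W \<le> ct"
      unfolding ct_def W_def by (rule cross[OF sparsity sigma_pos wv])
    have Seq: "(\<Sum>i<M. \<sigma> i/2 * innern (n i) (w i) (w i)) = S z zs" by (simp add: S_def w_def)
    have gw: "Lg zs \<nu>' \<mu>' + S z zs \<le> Lg z \<nu>' \<mu>'" by (rule growth[OF zs mn z])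
    show ?thesis using eq cr Seq gw d' by linarith
  qed
  have "dual_fun M Mb n p q A C b c f \<nu>' \<mu>' + gr - 1/2 * W \<le> dual_fun M Mb n p q A C b c f \<nu> \<mu>"
    unfolding dual_fun_def[of _ _ _ _ _ _ _ _ _ _ \<nu> \<mu>] using ne key by (intro cINF_greatest) auto
  then show ?thesis by (simp add: gr_def W_def)
qed

end

theorem lemma1:
  fixes M Mb :: nat and n p q :: "nat \<Rightarrow> nat"
    and A C :: "nat \<Rightarrow> nat \<Rightarrow> nat \<Rightarrow> nat \<Rightarrow> real"
    and b c :: "nat \<Rightarrow> nat \<Rightarrow> real"
    and E :: "nat \<Rightarrow> nat \<Rightarrow> bool"
    and f :: "nat \<Rightarrow> (nat \<Rightarrow> real) \<Rightarrow> real"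
    and \<sigma> L :: "nat \<Rightarrow> real"
    and \<nu> \<mu> \<nu>' \<mu>' :: "nat \<Rightarrow> nat \<Rightarrow> real"
  assumes sparsity: "\<forall>j<Mb. \<forall>i<M. \<not> E j i \<longrightarrow>
      (\<forall>r<p j. \<forall>k<n i. A j i r k = 0) \<and> (\<forall>r<q j. \<forall>k<n i. C j i r k = 0)"
    and sigma_pos: "\<forall>i<M. 0 < \<sigma> i"
    and strong: "\<forall>i<M. strongly_convex_vec (n i) (f i) (\<sigma> i)"
    and lipgrad: "\<forall>i<M. lipschitz_grad_vec (n i) (f i) (L i)"
    and lam: "in_D Mb q \<mu>"
    and lam': "in_D Mb q \<mu>'"
  shows "dual_fun M Mb n p q A C b c f \<nu> \<mu>
     \<ge> dual_fun M Mb n p q A C b c f \<nu>' \<mu>'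
        + ((\<Sum>j<Mb. \<Sum>r<p j. dual_grad_nu M Mb n p q A C b c f \<nu>' \<mu>' j r * (\<nu> j r - \<nu>' j r))
           + (\<Sum>j<Mb. \<Sum>r<q j. dual_grad_mu M Mb n p q A C b c f \<nu>' \<mu>' j r * (\<mu> j r - \<mu>' j r)))
        - 1/2 * Wnorm_sq M Mb n p q A C E \<sigma> (\<lambda>j r. \<nu> j r - \<nu>' j r) (\<lambda>j r. \<mu> j r - \<mu>' j r)"
  proof -
  interpret setting M Mb n p q A C b c E f \<sigma> L
    using sparsity sigma_pos strong lipgrad by unfold_locales
  show ?thesis by (rule main)
qed

end
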